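(* Fix $c>0$ and $b\in\mathbb C$ with $|b|<1$, and let $u(x)$ be the germ at $x=0$ with $u(0)=0$ defined by $u=x\bigl(1+\frac{cu^2}{1-bu}\bigr)$, equivalently the local inverse at $u=0$ of $X(u)=\frac{u(1-bu)}{1-bu+cu^2}$. Let $\rho_*$ be the radius of analyticity of this germ at $0$. Then $\rho_*=\min\{|x_*^+|,|x_*^-|\}$ where $x_*^\pm=\frac{1}{b\pm2\sqrt c}$. *)

theory Defs
  imports "HOL-Complex_Analysis.Complex_Analysis"
begin

definition is_u_germ :: "real \<Rightarrow> complex \<Rightarrow> (complex \<Rightarrow> complex) \<Rightarrow> bool" where
  "is_u_germ c b f \<longleftrightarrow> f 0 = 0 \<and>
     (\<forall>\<^sub>F x in nhds 0. f x = x * (1 + of_real c * (f x)^2 / (1 - b * f x)))"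

definition u_radius :: "real \<Rightarrow> complex \<Rightarrow> ereal" where
  "u_radius c b = Sup {ereal r | r. r > 0 \<and>
      (\<exists>f. f holomorphic_on ball 0 r \<and> is_u_germ c b f)}"

definition x_star_plus :: "real \<Rightarrow> complex \<Rightarrow> complex" where
  "x_star_plus c b = 1 / (b + 2 * of_real (sqrt c))"

definition x_star_minus :: "real \<Rightarrow> complex \<Rightarrow> complex" where
  "x_star_minus c b = 1 / (b - 2 * of_real (sqrt c))"

text \<open>min{|x+|,|x-|}, where a point x = 1/0 is read as infinity (so it is
  discarded from the minimum).\<close>
definition min_abs_xstar :: "real \<Rightarrow> complex \<Rightarrow> real" where
  "min_abs_xstar c b =
    (if b - 2 * of_real (sqrt c) = 0 then cmod (x_star_plus c b)
     else if b + 2 * of_real (sqrt c) = 0 then cmod (x_star_minus c b)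
     else min (cmod (x_star_plus c b)) (cmod (x_star_minus c b)))"

end

theory Submission
  imports Defs
begin

lemma alg_contra:
  fixes x f f' b cc :: complex
  assumes x: "x \<noteq> 0" and cc: "cc \<noteq> 0"
    and E1: "(b + x*cc) * f^2 - (1 + x*b) * f + x = 0"
    and E2: "cc * f^2 + 2*(b + x*cc)*f*f' - b*f - (1 + x*b)*f' + 1 = 0"
    and D: "(1 + x*b)^2 - 4*x*(b + x*cc) = 0"
  shows False
proof -
  have "(2*(b+x*cc)*f - (1+x*b))^2 = 4*(b+x*cc)*((b + x*cc) * f^2 - (1 + x*b) * f) + (1+x*b)^2"
    by algebra
  also have "\<dots> = (1 + x*b)^2 - 4*x*(b + x*cc)" using E1
    by algebra
  finally have "2*(b+x*cc)*f - (1+x*b) = 0" using D by simp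
  hence h: "2*(b+x*cc)*f = 1 + x*b" by simp
  have "cc * f^2 - b*f + 1 = 0"
  proof -
    have "cc * f^2 + f' * (2*(b + x*cc)*f - (1 + x*b)) - b*f + 1 = 0" using E2
      by algebra
    thus ?thesis using h by simp
  qed
  hence q: "x*(cc * f^2 - b*f + 1) = 0" by simp
  have "f * (b*f - 1) = 0" using E1 q by algebra
  hence "f = 0 \<or> b*f = 1" by simp
  thus False
  proof
    assume "f = 0" thus False using E1 x by simp
  next
    assume bf: "b*f = 1"
    hence "f \<noteq> 0" by auto
    have "cc*f^2 = 0" using \<open>cc * f^2 - b*f + 1 = 0\<close> bf by simp
    hence "cc = 0" using \<open>f \<noteq> 0\<close> by simp
    thus False using cc by simp
  qed
qed

lemma upper:
  fixes b :: complex and f :: "complex \<Rightarrow> complex"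
  assumes c: "c > 0" and holf: "f holomorphic_on ball 0 r" and germ: "is_u_germ c b f"
    and xs: "xs \<in> ball 0 r" "xs \<noteq> 0"
    and D: "(1 + xs*b)^2 - 4*xs*(b + xs* of_real c) = 0"
  shows False
proof -
  have r: "r > 0" using xs(1) norm_ge_zero[of xs] by (simp add: dist_norm del: norm_ge_zero)
  have "isCont f 0"
    using holf r by (meson centre_in_ball holomorphic_on_imp_continuous_on open_ball continuous_on_eq_continuous_at)
  hence "(f \<longlongrightarrow> f 0) (nhds 0)" using tendsto_at_iff_tendsto_nhds isCont_def by blast
  hence "((\<lambda>x. 1 - b * f x) \<longlongrightarrow> 1) (nhds 0)" using germ unfolding is_u_germ_def
    by (auto intro!: tendsto_eq_intros)
  hence ev1: "\<forall>\<^sub>F x in nhds 0. 1 - b * f x \<noteq> 0"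
    by (rule tendsto_imp_eventually_ne) simp
  define g where "g x = (b + x* of_real c) * (f x)^2 - (1 + x*b) * f x + x" for x
  have "\<forall>\<^sub>F x in nhds 0. g x = 0"
    using ev1 conjunct2[OF germ[unfolded is_u_germ_def]]
  proof eventually_elim
    case (elim x)
    hence "f x * (1 - b * f x) = x * (1 - b * f x) + x * of_real c * (f x)^2"
      by (simp add: field_simps)
    thus ?case unfolding g_def by algebra
  qed
  then obtain d where d: "d > 0" "\<And>x. dist x 0 < d \<Longrightarrow> g x = 0"
    unfolding eventually_nhds_metric by blast
  have holg: "g holomorphic_on ball 0 r" unfolding g_def using holf
    by (intro holomorphic_intros) auto
  have g0: "g w = 0" if "w \<in> ball 0 r" for w
    by (rule analytic_continuation[OF holg open_ball connected_ball, of "ball 0 (min d r)" 0])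
       (use d r that in \<open>auto simp: islimpt_ball\<close>)
  have fd: "(f has_field_derivative deriv f xs) (at xs)"
    using holomorphic_derivI[OF holf open_ball xs(1)] .
  have "(g has_field_derivative
      (of_real c * (f xs)^2 + (b + xs* of_real c) * (2 * f xs * deriv f xs) - (b * f xs + (1 + xs*b) * deriv f xs) + 1)) (at xs)"
    unfolding g_def by (rule derivative_eq_intros fd refl | simp)+
  hence "((\<lambda>_. 0) has_field_derivative
      (of_real c * (f xs)^2 + (b + xs* of_real c) * (2 * f xs * deriv f xs) - (b * f xs + (1 + xs*b) * deriv f xs) + 1)) (at xs)"
    by (rule has_field_derivative_transform_within_open[OF _ open_ball xs(1)]) (simp add: g0)
  hence E2: "of_real c * (f xs)^2 + (b + xs* of_real c) * (2 * f xs * deriv f xs) - (b * f xs + (1 + xs*b) * deriv f xs) + 1 = 0"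
    using DERIV_const DERIV_unique by blast
  show False
    by (rule alg_contra[OF xs(2) _ g0[OF xs(1), unfolded g_def] _ D, of "deriv f xs"])
       (use c E2 in \<open>auto simp: algebra_simps\<close>)
qed

lemma inv_ball:
  fixes A x :: complex
  assumes "A \<noteq> 0" "cmod x < cmod (1/A)"
  shows "cmod (A*x) < 1"
proof -
  have "cmod x * cmod A < 1" using assms by (simp add: norm_divide field_simps)
  thus ?thesis by (simp add: norm_mult mult.commute)
qed

lemma AB_ne:
  assumes c: "c > 0"
  shows "b + 2 * complex_of_real (sqrt c) \<noteq> b - 2 * complex_of_real (sqrt c)"
  using c by simp

lemma rho_pos:
  assumes c: "c > 0"
  shows "0 < min_abs_xstar c b"
  using AB_ne[OF c, of b] unfolding min_abs_xstar_def x_star_plus_def x_star_minus_def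
  by auto

lemma rho_ball:
  assumes c: "c > 0" and x: "cmod x < min_abs_xstar c b"
  shows "cmod ((b + 2 * complex_of_real (sqrt c))*x) < 1 \<and> cmod ((b - 2 * complex_of_real (sqrt c))*x) < 1"
  using x AB_ne[OF c, of b] inv_ball[of "b + 2 * complex_of_real (sqrt c)" x] inv_ball[of "b - 2 * complex_of_real (sqrt c)" x]
  unfolding min_abs_xstar_def x_star_plus_def x_star_minus_def
  by (auto split: if_splits)

lemma rho_ex:
  assumes c: "c > 0"
  shows "\<exists>xs. cmod xs = min_abs_xstar c b \<and> xs \<noteq> 0 \<and>
     (1 - (b + 2 * complex_of_real (sqrt c))*xs) * (1 - (b - 2 * complex_of_real (sqrt c))*xs) = 0"
proof -
  let ?A = "b + 2 * complex_of_real (sqrt c)" and ?B = "b - 2 * complex_of_real (sqrt c)"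
  have pA: "?A \<noteq> 0 \<Longrightarrow> cmod (1/?A) = cmod (x_star_plus c b) \<and> 1/?A \<noteq> 0 \<and> (1 - ?A*(1/?A)) * (1 - ?B*(1/?A)) = 0"
    by (simp add: x_star_plus_def)
  have pB: "?B \<noteq> 0 \<Longrightarrow> cmod (1/?B) = cmod (x_star_minus c b) \<and> 1/?B \<noteq> 0 \<and> (1 - ?A*(1/?B)) * (1 - ?B*(1/?B)) = 0"
    by (simp add: x_star_minus_def)
  show ?thesis
  proof (cases "?B = 0")
    case True
    hence "?A \<noteq> 0" using AB_ne[OF c, of b] by auto
    thus ?thesis using pA True unfolding min_abs_xstar_def by metis
  next
    case False
    show ?thesis
    proof (cases "?A = 0")
      case True
      thus ?thesis using pB False unfolding min_abs_xstar_def by metis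
    next
      case F2: False
      show ?thesis
      proof (cases "cmod (x_star_plus c b) \<le> cmod (x_star_minus c b)")
        case True
        thus ?thesis using pA F2 False unfolding min_abs_xstar_def
          by (metis min.absorb1)
      next
        case F3: False
        thus ?thesis using pB F2 False unfolding min_abs_xstar_def
          by (metis min.absorb2 nle_le)
      qed
    qed
  qed
qed

lemma re_pos_csqrt:
  fixes z :: complex
  assumes "cmod z < 1"
  shows "1 - z \<notin> \<real>\<^sub>\<le>\<^sub>0"
proof -
  have "Re z < 1" using abs_Re_le_cmod[of z] assms by linarith
  thus ?thesis by (simp add: complex_nonpos_Reals_iff)
qed

lemma lower:
  fixes b :: complex
  assumes c: "c > 0"
  defines "A \<equiv> b + 2 * complex_of_real (sqrt c)" and "B \<equiv> b - 2 * complex_of_real (sqrt c)"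
  defines "S \<equiv> \<lambda>x. csqrt (1 - A*x) * csqrt (1 - B*x)"
  defines "f \<equiv> \<lambda>x. 2*x / (1 + x*b + S x)"
  shows "f holomorphic_on ball 0 (min_abs_xstar c b) \<and> is_u_germ c b f"
proof -
  let ?r = "min_abs_xstar c b"
  define s where "s = complex_of_real (sqrt c)"
  have s2: "s^2 = of_real c" using c by (simp add: s_def flip: of_real_power)
  have s0: "s \<noteq> 0" using c by (simp add: s_def)
  have SD: "(S x)^2 = (1 + x*b)^2 - 4*x*(b + x * of_real c)" for x
  proof -
    have "(S x)^2 = (1 - A*x) * (1 - B*x)" by (simp add: S_def power_mult_distrib)
    also have "\<dots> = (1 + x*b)^2 - 4*x*(b + x * of_real c)"
      unfolding A_def B_def s_def[symmetric] s2[symmetric] by (simp add: algebra_simps power2_eq_square)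
    finally show ?thesis .
  qed
  have inb: "cmod (A*x) < 1 \<and> cmod (B*x) < 1" if "x \<in> ball 0 ?r" for x
    using rho_ball[OF c, of x b] that by (simp add: A_def B_def)
  have T0: "1 + x*b + S x \<noteq> 0" if x: "x \<in> ball 0 ?r" for x
  proof
    assume T: "1 + x*b + S x = 0"
    hence "S x = -(1 + x*b)" by (metis add.commute add_eq_0_iff2 add_uminus_conv_diff diff_add_eq_diff_diff_swap minus_diff_eq)
    hence "(S x)^2 = (1 + x*b)^2" by (simp only: power2_minus)
    hence "4*x*(b + x * of_real c) = 0" using SD[of x] by simp
    hence "x = 0 \<or> b + x * of_real c = 0" by simp
    thus False
    proof
      assume "x = 0" thus False using T by (simp add: S_def)
    next
      assume xb: "b + x * of_real c = 0"
      hence "x * of_real c = - b" by (metis add.commute add_eq_0_iff2 minus_unique)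
      hence xe: "x = - b / of_real c" using c by (simp add: field_simps)
      have "cmod x * (4 * sqrt c) = cmod x * cmod (A - B)"
        using c by (simp add: A_def B_def norm_mult)
      also have "\<dots> \<le> cmod (A*x) + cmod (B*x)"
        by (metis norm_triangle_ineq4 left_diff_distrib norm_mult mult.commute)
      also have "\<dots> < 2" using inb[OF x] by simp
      finally have "cmod x * (4 * sqrt c) < 2" .
      hence "cmod b / c * (4 * sqrt c) < 2" using xe c by (simp add: norm_divide)
      hence bsmall: "cmod b * 2 * sqrt c < c" using c by (simp add: field_simps)
      have sc: "sqrt c * sqrt c = c" using c by simp
      have bs: "cmod b < sqrt c" 
      proof -
        have "cmod b * 2 * sqrt c < sqrt c * sqrt c" using bsmall sc by simp
        hence "cmod b * 2 < sqrt c" using c mult_right_less_imp_less[of "cmod b * 2" "sqrt c" "sqrt c"] by simp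
        thus ?thesis using norm_ge_zero[of b] by linarith
      qed
      have ReA: "0 < Re ((s + b)/s)" and ReB: "0 < Re ((s - b)/s)"
        using bs abs_Re_le_cmod[of b] c by (auto simp: s_def)
      have "1 - A*x = ((s + b)/s)^2"
        unfolding xe A_def s_def[symmetric] using s2 s0 c
        by (simp add: field_simps power2_eq_square)
      hence c1: "csqrt (1 - A*x) = (s + b)/s" using csqrt_unique ReA by metis
      have "1 - B*x = ((s - b)/s)^2"
        unfolding xe B_def s_def[symmetric] using s2 s0 c
        by (simp add: field_simps power2_eq_square)
      hence c2: "csqrt (1 - B*x) = (s - b)/s" using csqrt_unique ReB by metis
      have "0 = 1 + x*b + (s + b)/s * ((s - b)/s)" using T c1 c2 by (simp add: S_def)
      also have "\<dots> = 2 * (s^2 - b^2) / s^2" unfolding xe using s2 s0 c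
        by (simp add: field_simps power2_eq_square)
      finally have "b^2 = s^2" using s0 by simp
      hence "cmod b ^2 = sqrt c ^ 2" by (metis norm_power s_def norm_of_real real_sqrt_ge_0_iff c less_imp_le abs_of_nonneg)
      thus False using bs norm_ge_zero[of b] by (metis power2_eq_iff_nonneg real_sqrt_ge_zero c less_imp_le less_irrefl)
    qed
  qed
  have holS: "S holomorphic_on ball 0 ?r" unfolding S_def
    by (intro holomorphic_intros) (use inb re_pos_csqrt in auto)
  have holf: "f holomorphic_on ball 0 ?r" unfolding f_def
    by (intro holomorphic_intros holS) (use T0 in auto)
  have E1: "(b + x * of_real c) * (f x)^2 - (1 + x*b) * f x + x = 0" if x: "x \<in> ball 0 ?r" for x
  proof -
    define T where "T = 1 + x*b + S x"
    have T0': "T \<noteq> 0" using T0[OF x] by (simp add: T_def)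
    have "T^2 - 2*(1+x*b)*T + 4*x*(b + x * of_real c) = 0"
      unfolding T_def using SD[of x] by algebra
    hence "x * (T^2 - 2*(1+x*b)*T + 4*x*(b + x * of_real c)) / T^2 = 0" by simp
    moreover have "(b + x * of_real c) * (f x)^2 - (1 + x*b) * f x + x
        = x * (T^2 - 2*(1+x*b)*T + 4*x*(b + x * of_real c)) / T^2"
      unfolding f_def T_def[symmetric] using T0' by (simp add: field_simps power2_eq_square)
    ultimately show ?thesis by simp
  qed
  have r: "?r > 0" using rho_pos[OF c] .
  have "isCont f 0"
    using holf r by (meson centre_in_ball holomorphic_on_imp_continuous_on open_ball continuous_on_eq_continuous_at)
  hence "(f \<longlongrightarrow> f 0) (nhds 0)" using tendsto_at_iff_tendsto_nhds isCont_def by blast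
  moreover have f0: "f 0 = 0" by (simp add: f_def)
  ultimately have "((\<lambda>x. 1 - b * f x) \<longlongrightarrow> 1) (nhds 0)"
    by (auto intro!: tendsto_eq_intros)
  hence ev1: "\<forall>\<^sub>F x in nhds 0. 1 - b * f x \<noteq> 0"
    by (rule tendsto_imp_eventually_ne) simp
  have ev2: "\<forall>\<^sub>F x in nhds 0. x \<in> ball 0 ?r"
    using r by (intro eventually_nhds_in_open) auto
  have "\<forall>\<^sub>F x in nhds 0. f x = x * (1 + of_real c * (f x)^2 / (1 - b * f x))"
    using ev1 ev2
  proof eventually_elim
    case (elim x)
    have "f x * (1 - b * f x) = x * (1 - b * f x) + x * of_real c * (f x)^2"
      using E1[OF elim(2)] by algebra
    thus ?case using elim(1) by (simp add: field_simps)
  qed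
  thus ?thesis using holf f0 unfolding is_u_germ_def by blast
qed

theorem proposition6p2:
  fixes c :: real and b :: complex
  assumes "c > 0" and "cmod b < 1"
  shows "u_radius c b = ereal (min_abs_xstar c b)"
proof -
  note c = assms(1)
  let ?r = "min_abs_xstar c b"
  let ?M = "{ereal r | r. r > 0 \<and> (\<exists>f. f holomorphic_on ball 0 r \<and> is_u_germ c b f)}"
  have mem: "ereal ?r \<in> ?M" using lower[OF c, of b] rho_pos[OF c, of b] by blast
  have bnd: "e \<le> ereal ?r" if "e \<in> ?M" for e
  proof -
    obtain r f where e: "e = ereal r" "r > 0" "f holomorphic_on ball 0 r" "is_u_germ c b f"
      using \<open>e \<in> ?M\<close> by blast
    show ?thesis
    proof (rule ccontr)
      assume "\<not> e \<le> ereal ?r"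
      hence lt: "?r < r" using e(1) by simp
      obtain xs where xs: "cmod xs = ?r" "xs \<noteq> 0"
        "(1 - (b + 2 * complex_of_real (sqrt c))*xs) * (1 - (b - 2 * complex_of_real (sqrt c))*xs) = 0"
        using rho_ex[OF c, of b] by blast
      define s where "s = complex_of_real (sqrt c)"
      have s2: "s^2 = of_real c" using c by (simp add: s_def flip: of_real_power)
      have "(1 - (b + 2 * s)*xs) * (1 - (b - 2 * s)*xs) = (1 + xs*b)^2 - 4*xs*(b + xs * of_real c)"
        unfolding s2[symmetric] by (simp add: algebra_simps power2_eq_square)
      hence D: "(1 + xs*b)^2 - 4*xs*(b + xs * of_real c) = 0" using xs(3) by (simp add: s_def)
      show False
        by (rule upper[OF c e(3) e(4) _ xs(2) D]) (use xs(1) lt in simp)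
    qed
  qed
  show ?thesis unfolding u_radius_def
    by (rule antisym[OF Sup_least[OF bnd] Sup_upper[OF mem]])
qed
end
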